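(* Let $\gamma<1$, $\gamma\neq 0$. The following two conditions are equivalent. (A) For all $\gamma'\in(\gamma,1)$, $$\lim_{x\uparrow\infty}\frac{u_0'(x)}{x^{\gamma'-1}}=0,$$ and for all $\gamma''<\gamma$, $$\lim_{x\uparrow\infty}\frac{u_0'(x)}{x^{\gamma''-1}}=\infty.$$ (B) The measure $\mu$ has finite support with right boundary at $\frac{1}{1-\gamma}$, i.e. $$\inf\{y>0:\mu((y,\infty))=0\}=\frac{1}{1-\gamma}.$$
   Context: Let $\mu$ be a nonzero finite positive Borel measure on $(0,\infty)$ such that $\int y e^{yz}\mu(dy)<\infty$ for every $z\in\mathbb{R}$. Define $h(z,t):=\int e^{yz-\frac12 y^2 t}\mu(dy)$ for $(z,t)\in\mathbb{R}\times[0,\infty)$. For each $t$, the map $z\mapsto h(z,t)$ is strictly increasing with range $(0,\infty)$. Let $u:(0,\infty)\times[0,\infty)\to\mathbb{R}$ be smooth, strictly increasing and strictly concave in $x$, solving $u_t=\frac12 u_x^2/u_{xx}$, and related to $h$ by $u_x(h(z,t),t)=e^{-z+t/2}$ for all $(z,t)$. Write $u_0(x):=u(x,0)$. *)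

theory Defs
  imports "HOL-Analysis.Analysis"
begin

definition hfun :: "real measure \<Rightarrow> real \<Rightarrow> real \<Rightarrow> real" where
  "hfun \<mu> z t = (\<integral>y. exp (y * z - y\<^sup>2 * t / 2) \<partial>\<mu>)"

text \<open>Smoothness (C-infinity) of a function of two real variables on a set S:
  all iterated partial derivatives (one-sided at boundary points, i.e. taken
  within S) exist and are continuous on S.\<close>
definition smooth2_on :: "(real \<times> real) set \<Rightarrow> (real \<times> real \<Rightarrow> real) \<Rightarrow> bool" where
  "smooth2_on S f \<longleftrightarrow>
     (\<exists>F. f \<in> F \<and>
        (\<forall>g\<in>F. continuous_on S g \<and>
           (\<exists>g1 g2. g1 \<in> F \<and> g2 \<in> F \<and>
              (\<forall>p\<in>S. ((\<lambda>s. g (s, snd p)) has_real_derivative g1 p)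
                         (at (fst p) within {s. (s, snd p) \<in> S}) \<and>
                      ((\<lambda>s. g (fst p, s)) has_real_derivative g2 p)
                         (at (snd p) within {s. (fst p, s) \<in> S})))))"

end

theory Submission imports Defs begin

locale muloc =
  fixes \<mu> :: "real measure"
  assumes mu_sets: "sets \<mu> = sets borel"
    and mu_finite: "finite_measure \<mu>"
    and mu_pos: "emeasure \<mu> {..0} = 0"
    and mu_nonzero: "emeasure \<mu> UNIV \<noteq> 0"
    and mu_int: "\<And>z. integrable \<mu> (\<lambda>y. y * exp (y * z))"
begin

definition H where "H z = (\<integral>y. exp (y * z) \<partial>\<mu>)"

definition S where "S = {y. y > 0 \<and> emeasure \<mu> {y<..} = 0}"

lemma hfun0: "hfun \<mu> z 0 = H z" by (simp add: hfun_def H_def)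

lemma space_eq: "space \<mu> = UNIV"
  using sets_eq_imp_space_eq[OF mu_sets] by simp

lemma sets_in[simp]: "A \<in> sets borel \<Longrightarrow> A \<in> sets \<mu>"
  using mu_sets by simp

lemma meas: assumes "f \<in> borel_measurable borel" shows "f \<in> borel_measurable \<mu>"
  using assms measurable_cong_sets[OF mu_sets refl, of borel] by blast

lemma fin: "emeasure \<mu> A \<noteq> \<infinity>"
  using finite_measure.emeasure_finite[OF mu_finite] by simp

lemma emeq: "emeasure \<mu> A = ennreal (measure \<mu> A)"
  using fin by (simp add: emeasure_eq_ennreal_measure)

lemma measure_pos: "emeasure \<mu> A \<noteq> 0 \<Longrightarrow> measure \<mu> A > 0"
  using emeq[of A] by (metis ennreal_0 measure_nonneg order_less_le)

lemma AE_pos: "AE y in \<mu>. y > 0"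
proof (rule AE_I'[of "{..0}"])
  show "{..0} \<in> null_sets \<mu>" using mu_pos by (simp add: null_setsI)
  show "{x \<in> space \<mu>. \<not> 0 < x} \<subseteq> {..0::real}" by auto
qed

lemma integrable_exp: "integrable \<mu> (\<lambda>y. exp (y * z))"
proof (rule Bochner_Integration.integrable_bound[where f="\<lambda>y. y * exp (y * z) + exp \<bar>z\<bar>"])
  show "integrable \<mu> (\<lambda>y. y * exp (y * z) + exp \<bar>z\<bar>)"
    using mu_int finite_measure.integrable_const[OF mu_finite] by (intro Bochner_Integration.integrable_add) auto
  show "(\<lambda>y. exp (y * z)) \<in> borel_measurable \<mu>" by (intro meas) measurable
  show "AE y in \<mu>. norm (exp (y * z)) \<le> norm (y * exp (y * z) + exp \<bar>z\<bar>)"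
    using AE_pos
  proof eventually_elim
    case (elim y)
    have "exp (y * z) \<le> y * exp (y * z) + exp \<bar>z\<bar>"
    proof (cases "y \<ge> 1")
      case True
      have "1 * exp (y * z) \<le> y * exp (y * z)" using True by (intro mult_right_mono) auto
      moreover have "0 < exp \<bar>z\<bar>" by simp
      ultimately show ?thesis by linarith
    next
      case False
      have "y * z \<le> y * \<bar>z\<bar>" using elim by (intro mult_left_mono) auto
      also have "\<dots> \<le> \<bar>z\<bar>" using elim False by (intro mult_left_le_one_le) auto
      finally have "exp (y * z) \<le> exp \<bar>z\<bar>" by simp
      moreover have "0 \<le> y * exp (y * z)" using elim by simp
      ultimately show ?thesis by linarith
    qed
    then show ?case using elim by simp
  qed
qed

lemma H_convex: "convex_on UNIV H"
  unfolding convex_on_def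
proof (intro conjI ballI allI impI)
  fix a b u v :: real assume uv: "0 \<le> u" "0 \<le> v" "u + v = 1"
  have "H (u *\<^sub>R a + v *\<^sub>R b) = (\<integral>y. exp (u * (y * a) + v * (y * b)) \<partial>\<mu>)"
    unfolding H_def by (simp add: algebra_simps)
  also have "\<dots> \<le> (\<integral>y. u * exp (y * a) + v * exp (y * b) \<partial>\<mu>)"
  proof (rule integral_mono)
    show "integrable \<mu> (\<lambda>y. exp (u * (y * a) + v * (y * b)))"
      using integrable_exp[of "u * a + v * b"] by (simp add: algebra_simps)
    show "integrable \<mu> (\<lambda>y. u * exp (y * a) + v * exp (y * b))"
      using integrable_exp by auto
    fix y
    show "exp (u * (y * a) + v * (y * b)) \<le> u * exp (y * a) + v * exp (y * b)"
      using exp_convex uv unfolding convex_on_def by auto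
  qed
  also have "\<dots> = u * H a + v * H b"
    unfolding H_def using integrable_exp by simp
  finally show "H (u *\<^sub>R a + v *\<^sub>R b) \<le> u * H a + v * H b" .
qed simp

lemma H_cont: "continuous_on UNIV H"
  by (rule convex_on_continuous[OF open_UNIV H_convex])

lemma H_lower: "z \<ge> 0 \<Longrightarrow> measure \<mu> {B<..} * exp (B * z) \<le> H z"
proof -
  assume z: "z \<ge> 0"
  have "measure \<mu> {B<..} * exp (B * z) = (\<integral>y. indicator {B<..} y * exp (B * z) \<partial>\<mu>)"
    using space_eq by simp
  also have "\<dots> \<le> H z" unfolding H_def
  proof (rule integral_mono)
    show "integrable \<mu> (\<lambda>y. indicator {B<..} y * exp (B * z))"
      using fin by (intro integrable_mult_left integrable_real_indicator) (auto simp: less_top)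
    show "integrable \<mu> (\<lambda>y. exp (y * z))" by (rule integrable_exp)
    fix y show "indicator {B<..} y * exp (B * z) \<le> exp (y * z)"
      using z by (auto simp: indicator_def intro!: mult_right_mono)
  qed
  finally show ?thesis .
qed

lemma H_upper:
  assumes "emeasure \<mu> {b<..} = 0" "z \<ge> 0"
  shows "H z \<le> measure \<mu> UNIV * exp (b * z)"
proof -
  have AEb: "AE y in \<mu>. y \<le> b"
  proof (rule AE_I'[of "{b<..}"])
    show "{b<..} \<in> null_sets \<mu>" using assms by (simp add: null_setsI)
  qed auto
  have "H z \<le> (\<integral>y. exp (b * z) \<partial>\<mu>)" unfolding H_def
  proof (rule integral_mono_AE)
    show "integrable \<mu> (\<lambda>y. exp (y * z))" by (rule integrable_exp)
    show "integrable \<mu> (\<lambda>y. exp (b * z))" using finite_measure.integrable_const[OF mu_finite] by auto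
    show "AE y in \<mu>. exp (y * z) \<le> exp (b * z)" using AEb
      by eventually_elim (use assms(2) in \<open>auto intro: mult_right_mono\<close>)
  qed
  also have "\<dots> = measure \<mu> UNIV * exp (b * z)" using space_eq by simp
  finally show ?thesis .
qed

lemma S_bdd: "bdd_below S" unfolding S_def by (rule bdd_belowI[of _ 0]) auto

lemma S_null: assumes "S \<noteq> {}" shows "emeasure \<mu> {Inf S<..} = 0"
proof -
  have eq: "{Inf S<..} = (\<Union>n. {Inf S + 1 / Suc n<..})"
  proof (rule set_eqI, rule iffI)
    fix x assume "x \<in> {Inf S<..}"
    then have "x - Inf S > 0" by simp
    then obtain n where "inverse (real (Suc n)) < x - Inf S" using reals_Archimedean by blast
    then have "Inf S + 1 / Suc n < x" by (simp add: inverse_eq_divide)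
    then show "x \<in> (\<Union>n. {Inf S + 1 / Suc n<..})" by blast
  next
    fix x assume "x \<in> (\<Union>n. {Inf S + 1 / real (Suc n)<..})"
    then obtain n where "x \<in> {Inf S + 1 / real (Suc n)<..}" by blast
    then have h1: "Inf S + 1 / real (Suc n) < x" by (simp only: greaterThan_iff)
    have h2: "0 < 1 / real (Suc n)" by simp
    from h1 h2 have "Inf S < x" by linarith
    then show "x \<in> {Inf S<..}" by simp
  qed
  have "emeasure \<mu> {Inf S + 1 / Suc n<..} = 0" for n
  proof -
    have "Inf S < Inf S + 1 / Suc n" by simp
    then obtain s where s: "s \<in> S" "s < Inf S + 1 / Suc n" using cInf_lessD[OF assms] by blast
    then have "emeasure \<mu> {Inf S + 1 / Suc n<..} \<le> emeasure \<mu> {s<..}"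
      by (intro emeasure_mono) auto
    also have "\<dots> = 0" using s unfolding S_def by simp
    finally show ?thesis by simp
  qed
  then show ?thesis unfolding eq by (intro emeasure_UN_eq_0) auto
qed

lemma S_pos: assumes "S \<noteq> {}" shows "Inf S > 0"
proof -
  have ge: "Inf S \<ge> 0" using assms by (intro cInf_greatest) (auto simp: S_def)
  show ?thesis
  proof (rule ccontr)
    assume "\<not> Inf S > 0"
    then have "Inf S = 0" using ge by simp
    then have z: "emeasure \<mu> {0<..} = 0" using S_null[OF assms] by simp
    have U: "UNIV = {..0::real} \<union> {0<..}" by auto
    have "emeasure \<mu> UNIV = emeasure \<mu> ({..0} \<union> {0<..})"
      by (subst U) (rule refl)
    also have "\<dots> \<le> emeasure \<mu> {..0} + emeasure \<mu> {0<..}"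
      by (intro emeasure_subadditive) auto
    also have "\<dots> = 0" using z mu_pos by simp
    finally show False using mu_nonzero by simp
  qed
qed

lemma notin_S: assumes "B > 0" "S = {} \<or> B < Inf S" shows "emeasure \<mu> {B<..} \<noteq> 0"
proof
  assume "emeasure \<mu> {B<..} = 0"
  then have "B \<in> S" using assms by (simp add: S_def)
  then show False using assms cInf_lower[OF _ S_bdd, of B] by auto
qed

lemma exB: "\<exists>B>0. measure \<mu> {B<..} > 0"
proof (cases "S = {}")
  case True
  then show ?thesis using notin_S[of 1] measure_pos by (intro exI[of _ 1]) auto
next
  case False
  then show ?thesis using notin_S[of "Inf S / 2"] measure_pos S_pos[OF False]
    by (intro exI[of _ "Inf S / 2"]) auto
qed

lemma H0_pos: "H 0 > 0"
  using measure_pos[OF mu_nonzero] space_eq by (simp add: H_def)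

lemma H_pos: "z \<ge> 0 \<Longrightarrow> H z > 0"
proof -
  obtain B where B: "B > 0" "measure \<mu> {B<..} > 0" using exB by blast
  assume z: "z \<ge> 0"
  have "0 < measure \<mu> {B<..} * exp (B * z)" using B by simp
  also have "\<dots> \<le> H z" using H_lower[OF z] .
  finally show ?thesis .
qed

lemma H_surj: assumes "x \<ge> H 0" shows "\<exists>z\<ge>0. H z = x"
proof -
  obtain B where B: "B > 0" "measure \<mu> {B<..} > 0" using exB by blast
  define c where "c = measure \<mu> {B<..}"
  have c: "c > 0" using B by (simp add: c_def)
  have x0: "x > 0" using assms H0_pos by simp
  define n where "n = \<bar>ln (x / c)\<bar> / B"
  have n0: "n \<ge> 0" using B by (simp add: n_def)
  have Bn: "B * n = \<bar>ln (x / c)\<bar>" using B by (simp add: n_def)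
  have "x / c = exp (ln (x / c))" using x0 c by simp
  also have "\<dots> \<le> exp (B * n)" unfolding Bn by simp
  finally have "x / c \<le> exp (B * n)" .
  then have "x \<le> c * exp (B * n)" using c by (simp add: divide_le_eq mult.commute)
  also have "\<dots> \<le> H n" using H_lower[OF n0] by (simp add: c_def)
  finally have "x \<le> H n" .
  then obtain z where "0 \<le> z" "z \<le> n" "H z = x"
    using IVT'[of H 0 x n] assms n0 continuous_on_subset[OF H_cont] by auto
  then show ?thesis by blast
qed

lemma bound_low:
  assumes z: "z \<ge> 0" and B: "B > 0" "measure \<mu> {B<..} > 0"
  shows "exp (- z) \<ge> (H z / measure \<mu> {B<..}) powr (- 1 / B)"
proof -
  define c where "c = measure \<mu> {B<..}"
  have c: "c > 0" using B by (simp add: c_def)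
  have "c * exp (B * z) \<le> H z" using H_lower[OF z, of B] by (simp add: c_def)
  then have le: "exp (B * z) \<le> H z / c" using c by (simp add: le_divide_eq mult.commute)
  have "(H z / c) powr (- 1 / B) \<le> exp (B * z) powr (- 1 / B)"
    using B le by (intro powr_mono2') auto
  also have "exp (B * z) powr (- 1 / B) = exp (- z)" using B by (simp add: powr_def)
  finally show ?thesis by (simp add: c_def)
qed

lemma bound_up:
  assumes z: "z \<ge> 0" and b: "b > 0" "emeasure \<mu> {b<..} = 0"
  shows "exp (- z) \<le> (H z / measure \<mu> UNIV) powr (- 1 / b)"
proof -
  define M where "M = measure \<mu> UNIV"
  have M: "M > 0" using measure_pos[OF mu_nonzero] by (simp add: M_def)
  have "H z \<le> M * exp (b * z)" using H_upper[OF b(2) z] by (simp add: M_def)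
  then have le: "H z / M \<le> exp (b * z)" using M by (simp add: divide_le_eq mult.commute)
  have "exp (- z) = exp (b * z) powr (- 1 / b)" using b by (simp add: powr_def)
  also have "\<dots> \<le> (H z / M) powr (- 1 / b)"
    using b le H_pos[OF z] M by (intro powr_mono2') auto
  finally show ?thesis by (simp add: M_def)
qed

end

lemma lin1: "(a::real) < 1 - g \<Longrightarrow> g < 1 - (a + (1 - g)) / 2" by (simp add: field_simps)
lemma lin2: "(a::real) > 0 \<Longrightarrow> 1 - g > 0 \<Longrightarrow> 1 - (a + (1 - g)) / 2 < 1" by (simp add: field_simps)
lemma lin3: "(a::real) < 1 - g \<Longrightarrow> 1 - (1 - (a + (1 - g)) / 2) - a > 0" by (simp add: field_simps)
lemma lin4: "1 - g < (a::real) \<Longrightarrow> 1 - (a + (1 - g)) / 2 < g" by (simp add: field_simps)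
lemma lin5: "1 - g < (a::real) \<Longrightarrow> 1 - (1 - (a + (1 - g)) / 2) - a < 0" by (simp add: field_simps)

lemma powr_alg:
  fixes x C a p :: real
  assumes "x > 0" "C > 0"
  shows "(x / C) powr a * x powr p = C powr (- a) * x powr (a + p)"
  using assms by (simp add: powr_divide powr_add powr_minus field_simps)

lemma to0_at_top_contra:
  fixes f :: "real \<Rightarrow> real"
  assumes "(f \<longlongrightarrow> 0) at_top" "filterlim f at_top at_top"
  shows False
proof -
  have "eventually (\<lambda>x. f x < 1) at_top" using order_tendstoD(2)[OF assms(1)] by simp
  moreover have "eventually (\<lambda>x. 1 \<le> f x) at_top" using assms(2) by (simp add: filterlim_at_top)
  ultimately have "eventually (\<lambda>x::real. False) at_top" by eventually_elim auto
  then show False by simp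
qed

lemma powr_to_top:
  fixes e c :: real assumes "e > 0" "c > 0"
  shows "filterlim (\<lambda>x::real. c * x powr e) at_top at_top"
proof -
  have "((\<lambda>x::real. x powr (- e)) \<longlongrightarrow> 0) at_top"
    using assms by (intro tendsto_neg_powr filterlim_ident) auto
  moreover have "eventually (\<lambda>x::real. 0 < x powr (- e)) at_top"
    using eventually_gt_at_top[of 0] by eventually_elim auto
  ultimately have "filterlim (\<lambda>x::real. inverse (x powr (- e))) at_top at_top"
    by (rule filterlim_inverse_at_top)
  then have "filterlim (\<lambda>x::real. c * inverse (x powr (- e))) at_top at_top"
    using assms by (intro filterlim_tendsto_pos_mult_at_top[OF tendsto_const]) auto
  then show ?thesis
    by (rule filterlim_cong[THEN iffD1, rotated 3])
       (auto simp: powr_minus eventually_gt_at_top)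
qed

lemma powr_to_0:
  fixes e c :: real assumes "e < 0"
  shows "((\<lambda>x::real. c * x powr e) \<longlongrightarrow> 0) at_top"
proof -
  have "((\<lambda>x::real. x powr e) \<longlongrightarrow> 0) at_top"
    using assms by (intro tendsto_neg_powr filterlim_ident) auto
  then show ?thesis using tendsto_mult[OF tendsto_const] by fastforce
qed

theorem lemma6:
  fixes \<mu> :: "real measure"
    and u ux uxx ut :: "real \<Rightarrow> real \<Rightarrow> real"
    and \<gamma> :: real
  assumes mu_sets: "sets \<mu> = sets borel"
    and mu_finite: "finite_measure \<mu>"
    and mu_pos: "emeasure \<mu> {..0} = 0"
    and mu_nonzero: "emeasure \<mu> UNIV \<noteq> 0"
    and mu_int: "\<And>z. integrable \<mu> (\<lambda>y. y * exp (y * z))"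
    and u_smooth: "smooth2_on ({0<..} \<times> {0..}) (\<lambda>(x, t). u x t)"
    and ux: "\<And>x t. x > 0 \<Longrightarrow> t \<ge> 0 \<Longrightarrow> ((\<lambda>s. u s t) has_real_derivative ux x t) (at x)"
    and uxx: "\<And>x t. x > 0 \<Longrightarrow> t \<ge> 0 \<Longrightarrow> ((\<lambda>s. ux s t) has_real_derivative uxx x t) (at x)"
    and ut: "\<And>x t. x > 0 \<Longrightarrow> t \<ge> 0 \<Longrightarrow>
               ((\<lambda>s. u x s) has_real_derivative ut x t) (at t within {0..})"
    and u_incr: "\<And>t. t \<ge> 0 \<Longrightarrow> strict_mono_on {0<..} (\<lambda>x. u x t)"
    and u_concave: "\<And>t x y a. t \<ge> 0 \<Longrightarrow> x > 0 \<Longrightarrow> y > 0 \<Longrightarrow> x \<noteq> y \<Longrightarrow> 0 < a \<Longrightarrow> a < 1 \<Longrightarrow>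
               u (a * x + (1 - a) * y) t > a * u x t + (1 - a) * u y t"
    and pde: "\<And>x t. x > 0 \<Longrightarrow> t \<ge> 0 \<Longrightarrow> ut x t = (1/2) * (ux x t)\<^sup>2 / uxx x t"
    and rel: "\<And>z t. t \<ge> 0 \<Longrightarrow> ux (hfun \<mu> z t) t = exp (- z + t / 2)"
    and gamma: "\<gamma> < 1" "\<gamma> \<noteq> 0"
  shows "((\<forall>\<gamma>'. \<gamma> < \<gamma>' \<and> \<gamma>' < 1 \<longrightarrow>
              ((\<lambda>x. ux x 0 / x powr (\<gamma>' - 1)) \<longlongrightarrow> 0) at_top) \<and>
          (\<forall>\<gamma>''. \<gamma>'' < \<gamma> \<longrightarrow>
              filterlim (\<lambda>x. ux x 0 / x powr (\<gamma>'' - 1)) at_top at_top))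
     \<longleftrightarrow>
         ({y. y > 0 \<and> emeasure \<mu> {y<..} = 0} \<noteq> {} \<and>
          Inf {y. y > 0 \<and> emeasure \<mu> {y<..} = 0} = 1 / (1 - \<gamma>))"
proof -
  interpret M: muloc \<mu>
    by (rule muloc.intro[OF mu_sets mu_finite mu_pos mu_nonzero mu_int])
  define S where "S = {y. y > 0 \<and> emeasure \<mu> {y<..} = 0}"
  have S_eq: "S = M.S" by (simp add: S_def M.S_def)
  define f where "f q x = ux x 0 / x powr (q - 1)" for q x
  define x0 where "x0 = max (M.H 0) 1"
  have K: "\<exists>z\<ge>0. M.H z = x \<and> ux x 0 = exp (- z)" if xx: "x \<ge> x0" for x
  proof -
    have "M.H 0 \<le> x" using xx by (simp add: x0_def)
    then obtain z where z: "z \<ge> 0" "M.H z = x" using M.H_surj[of x] by blast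
    have "ux x 0 = exp (- z)" using rel[where z=z and t=0] z by (simp add: M.hfun0)
    then show ?thesis using z by blast
  qed
  have x0pos: "x \<ge> x0 \<Longrightarrow> x > 0" for x by (simp add: x0_def)
  have fpos: "f q x > 0" if "x \<ge> x0" for q x
    using K[OF that] x0pos[OF that] by (auto simp: f_def)
  have f_eq: "f q x = ux x 0 * x powr (1 - q)" if "x \<ge> x0" for q x
    using x0pos[OF that] by (simp add: f_def powr_minus divide_inverse flip: powr_minus)
  have UP: "(f q \<longlongrightarrow> 0) at_top"
    if b: "b > 0" "emeasure \<mu> {b<..} = 0" and e: "1 - q - 1 / b < 0" for b q
  proof -
    define Mm where "Mm = measure \<mu> UNIV"
    have Mm: "Mm > 0" using M.measure_pos[OF mu_nonzero] by (simp add: Mm_def)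
    have le: "f q x \<le> Mm powr (1 / b) * x powr (1 - q - 1 / b)" if x: "x \<ge> x0" for x
    proof -
      obtain z where z: "z \<ge> 0" "M.H z = x" "ux x 0 = exp (- z)" using K[OF x] by blast
      have "ux x 0 \<le> (x / Mm) powr (- 1 / b)"
        using M.bound_up[OF z(1) b] z by (simp add: Mm_def)
      then have "f q x \<le> (x / Mm) powr (- 1 / b) * x powr (1 - q)"
        unfolding f_eq[OF x] by (intro mult_right_mono) auto
      also have "\<dots> = Mm powr (1 / b) * x powr (1 - q - 1 / b)"
        using powr_alg[OF x0pos[OF x] Mm] by simp
      finally show ?thesis .
    qed
    show ?thesis
    proof (rule tendsto_sandwich[OF _ _ tendsto_const powr_to_0[OF e]])
      show "eventually (\<lambda>x. 0 \<le> f q x) at_top"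
        using eventually_ge_at_top[of x0] by eventually_elim (use fpos in \<open>auto intro: less_imp_le\<close>)
      show "eventually (\<lambda>x. f q x \<le> Mm powr (1 / b) * x powr (1 - q - 1 / b)) at_top"
        using eventually_ge_at_top[of x0] by eventually_elim (rule le)
    qed
  qed
  have LOW: "filterlim (f q) at_top at_top"
    if B: "B > 0" "emeasure \<mu> {B<..} \<noteq> 0" and e: "1 - q - 1 / B > 0" for B q
  proof -
    define c where "c = measure \<mu> {B<..}"
    have c: "c > 0" using M.measure_pos[OF B(2)] by (simp add: c_def)
    have le: "c powr (1 / B) * x powr (1 - q - 1 / B) \<le> f q x" if x: "x \<ge> x0" for x
    proof -
      obtain z where z: "z \<ge> 0" "M.H z = x" "ux x 0 = exp (- z)" using K[OF x] by blast
      have "(x / c) powr (- 1 / B) \<le> ux x 0"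
        using M.bound_low[OF z(1) B(1)] c z by (simp add: c_def)
      then have "(x / c) powr (- 1 / B) * x powr (1 - q) \<le> f q x"
        unfolding f_eq[OF x] by (intro mult_right_mono) auto
      moreover have "(x / c) powr (- 1 / B) * x powr (1 - q) = c powr (1 / B) * x powr (1 - q - 1 / B)"
        using powr_alg[OF x0pos[OF x] c] by simp
      ultimately show ?thesis by simp
    qed
    show ?thesis
    proof (rule filterlim_at_top_mono[OF powr_to_top[OF e]])
      show "0 < c powr (1 / B)" using c by simp
      show "eventually (\<lambda>x. c powr (1 / B) * x powr (1 - q - 1 / B) \<le> f q x) at_top"
        using eventually_ge_at_top[of x0] by eventually_elim (rule le)
    qed
  qed
  have g1: "1 - \<gamma> > 0" using gamma by simp
  show ?thesis unfolding f_def[symmetric] S_def[symmetric]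
  proof
    assume A: "(\<forall>\<gamma>'. \<gamma> < \<gamma>' \<and> \<gamma>' < 1 \<longrightarrow> (f \<gamma>' \<longlongrightarrow> 0) at_top) \<and>
          (\<forall>\<gamma>''. \<gamma>'' < \<gamma> \<longrightarrow> filterlim (f \<gamma>'') at_top at_top)"
    have case1: False if B: "B > 1 / (1 - \<gamma>)" "emeasure \<mu> {B<..} \<noteq> 0" for B
    proof -
      have Bpos: "B > 0" using B(1) g1 by (smt (verit) divide_pos_pos)
      have iB: "1 / B < 1 - \<gamma>" using B(1) g1 Bpos by (simp add: field_simps)
      define q where "q = 1 - (1 / B + (1 - \<gamma>)) / 2"
      have iB0: "1 / B > 0" using Bpos by simp
      have q1: "\<gamma> < q" using lin1[OF iB] unfolding q_def .
      have q2: "q < 1" using lin2[OF iB0 g1] unfolding q_def .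
      have q3: "1 - q - 1 / B > 0" using lin3[OF iB] unfolding q_def .
      note q = q1 q2 q3
      show False using to0_at_top_contra A q LOW[OF Bpos B(2) q(3)] by blast
    qed
    have case2: False if S: "S \<noteq> {}" "Inf S < 1 / (1 - \<gamma>)"
    proof -
      define b where "b = Inf S"
      have b: "b > 0" "emeasure \<mu> {b<..} = 0" using M.S_pos M.S_null S by (auto simp: b_def S_eq)
      have ib: "1 - \<gamma> < 1 / b" using S(2) g1 b by (simp add: b_def field_simps)
      define q where "q = 1 - (1 / b + (1 - \<gamma>)) / 2"
      have q1: "q < \<gamma>" using lin4[OF ib] unfolding q_def .
      have q2: "1 - q - 1 / b < 0" using lin5[OF ib] unfolding q_def .
      note q = q1 q2
      show False using to0_at_top_contra A q UP[OF b q(2)] by blast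
    qed
    show "S \<noteq> {} \<and> Inf S = 1 / (1 - \<gamma>)"
    proof (cases "S = {}")
      case True
      have "2 / (1 - \<gamma>) > 1 / (1 - \<gamma>)" using g1 by (simp add: divide_strict_right_mono)
      moreover have "emeasure \<mu> {2 / (1 - \<gamma>)<..} \<noteq> 0"
        using M.notin_S True g1 S_eq by simp
      ultimately show ?thesis using case1 by blast
    next
      case False
      have "\<not> Inf S > 1 / (1 - \<gamma>)"
      proof
        assume l: "Inf S > 1 / (1 - \<gamma>)"
        define B where "B = (Inf S + 1 / (1 - \<gamma>)) / 2"
        have "B > 1 / (1 - \<gamma>)" "B < Inf S" using l by (auto simp: B_def)
        moreover have "B > 0" using \<open>B > 1 / (1 - \<gamma>)\<close> g1 by (smt (verit) divide_pos_pos)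
        ultimately show False using case1 M.notin_S[of B] S_eq by auto
      qed
      then show ?thesis using case2 False by force
    qed
  next
    assume R: "S \<noteq> {} \<and> Inf S = 1 / (1 - \<gamma>)"
    define b where "b = Inf S"
    have b: "b > 0" "emeasure \<mu> {b<..} = 0" using M.S_pos M.S_null R by (auto simp: b_def S_eq)
    have ib: "1 / b = 1 - \<gamma>" using R g1 by (simp add: b_def)
    show "(\<forall>\<gamma>'. \<gamma> < \<gamma>' \<and> \<gamma>' < 1 \<longrightarrow> (f \<gamma>' \<longlongrightarrow> 0) at_top) \<and>
          (\<forall>\<gamma>''. \<gamma>'' < \<gamma> \<longrightarrow> filterlim (f \<gamma>'') at_top at_top)"
    proof (intro conjI allI impI)
      fix q assume "\<gamma> < q \<and> q < 1"
      then show "(f q \<longlongrightarrow> 0) at_top" using UP[OF b] ib by simp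
    next
      fix q assume q: "q < \<gamma>"
      have q1: "1 - q > 0" using q g1 by simp
      define B where "B = (b + 1 / (1 - q)) / 2"
      have bdef: "b = 1 / (1 - \<gamma>)" using R by (simp add: b_def)
      have lt: "1 / (1 - q) < b" unfolding bdef
        by (rule divide_strict_left_mono) (use q g1 q1 in auto)
      have B: "B > 1 / (1 - q)" "B < b" using lt by (auto simp: B_def)
      have Bpos: "B > 0" using B(1) q1 by (smt (verit) divide_pos_pos)
      have "1 / B < 1 - q" using B(1) q1 Bpos by (simp add: field_simps)
      then have e: "1 - q - 1 / B > 0" by simp
      have "emeasure \<mu> {B<..} \<noteq> 0" using M.notin_S[OF Bpos] B(2) S_eq by (simp add: b_def)
      then show "filterlim (f q) at_top at_top" using LOW[OF Bpos _ e] by simp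
    qed
  qed
qed

end
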